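(* Let $f=\min\{0,X,Y,X+Y\}$. Then for all $N\ge1$, $\dim(U_N)\ge N\cdot\lfloor N/2\rfloor$, and consequently the entropy $H(f)=\lim_{N\to\infty}\dim(U_N)/N^2$ satisfies $H(f)\ge 1/2$; in particular $H(f)>0$.
   Context: For a tropical polynomial $f=\min_{1\le j\le m}\{a_j+t_{j,1}X+t_{j,2}Y\}$ (here $a_j=0$ and exponents $(0,0),(1,0),(0,1),(1,1)$) and $N\ge1$, let $T_N=\{0,\dots,N-1\}^2$ and consider variables $u(k_1,k_2)$, $(k_1,k_2)\in T_N$. For each shift $(s_1,s_2)\in\mathbb{Z}^2$ with all $(t_{j,1}+s_1,t_{j,2}+s_2)\in T_N$, the linearization is $\min_j\{a_j+u(t_{j,1}+s_1,t_{j,2}+s_2)\}$, satisfied by $u$ if the minimum is attained at least twice. $U_N\subset\mathbb{R}^{N^2}$ is the set of points satisfying all these linearizations (a finite union of convex polyhedra), $\dim$ is its dimension, and the entropy is $H(f)=\lim_{N\to\infty}\dim(U_N)/N^2$. *)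

theory Defs
  imports "HOL-Analysis.Analysis"
begin

text \<open>Points of the lattice: int \<times> int. A vector of R^(N^2) is a function
  u :: int \<times> int \<Rightarrow> real that vanishes outside T_N.\<close>

definition T :: "nat \<Rightarrow> (int \<times> int) set" where
  "T N = {0..<int N} \<times> {0..<int N}"

text \<open>A tropical polynomial in X,Y: a list of monomials (a_j, (t_j1, t_j2)),
  standing for min_j (a_j + t_j1 X + t_j2 Y).\<close>
type_synonym tpoly = "(real \<times> (int \<times> int)) list"

definition shiftpt :: "int \<times> int \<Rightarrow> int \<times> int \<Rightarrow> int \<times> int" where
  "shiftpt t s = (fst t + fst s, snd t + snd s)"

definition shift_ok :: "nat \<Rightarrow> tpoly \<Rightarrow> int \<times> int \<Rightarrow> bool" where
  "shift_ok N f s \<longleftrightarrow> (\<forall>j<length f. shiftpt (snd (f ! j)) s \<in> T N)"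

definition lin_val :: "tpoly \<Rightarrow> (int \<times> int \<Rightarrow> real) \<Rightarrow> int \<times> int \<Rightarrow> nat \<Rightarrow> real" where
  "lin_val f u s j = fst (f ! j) + u (shiftpt (snd (f ! j)) s)"

definition lin_sat :: "tpoly \<Rightarrow> (int \<times> int \<Rightarrow> real) \<Rightarrow> int \<times> int \<Rightarrow> bool" where
  "lin_sat f u s \<longleftrightarrow> (\<exists>i<length f. \<exists>j<length f. i \<noteq> j \<and>
      lin_val f u s i = lin_val f u s j \<and> (\<forall>l<length f. lin_val f u s i \<le> lin_val f u s l))"

definition U :: "nat \<Rightarrow> tpoly \<Rightarrow> (int \<times> int \<Rightarrow> real) set" where
  "U N f = {u. (\<forall>k. k \<notin> T N \<longrightarrow> u k = 0) \<and> (\<forall>s. shift_ok N f s \<longrightarrow> lin_sat f u s)}"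

text \<open>Dimension of a (finite union of convex polyhedra) S \<subseteq> R^(T_N): the largest d
  such that S contains a d-dimensional simplex, i.e. the convex hull of d+1
  affinely independent points. For a finite union of polyhedra this is the
  maximum of the dimensions of the pieces.\<close>
definition aff_indep :: "nat \<Rightarrow> nat \<Rightarrow> (nat \<Rightarrow> int \<times> int \<Rightarrow> real) \<Rightarrow> bool" where
  "aff_indep N d p \<longleftrightarrow> (\<forall>c :: nat \<Rightarrow> real.
     (\<forall>k\<in>T N. (\<Sum>i\<in>{1..d}. c i * (p i k - p 0 k)) = 0) \<longrightarrow> (\<forall>i\<in>{1..d}. c i = 0))"

definition simplex_in :: "nat \<Rightarrow> (nat \<Rightarrow> int \<times> int \<Rightarrow> real) \<Rightarrow> (int \<times> int \<Rightarrow> real) set \<Rightarrow> bool" where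
  "simplex_in d p S \<longleftrightarrow> (\<forall>w :: nat \<Rightarrow> real. (\<forall>i\<le>d. w i \<ge> 0) \<and> (\<Sum>i\<le>d. w i) = 1 \<longrightarrow>
     (\<lambda>k. \<Sum>i\<le>d. w i * p i k) \<in> S)"

definition polydim :: "nat \<Rightarrow> (int \<times> int \<Rightarrow> real) set \<Rightarrow> nat" where
  "polydim N S = Sup {d. \<exists>p. aff_indep N d p \<and> simplex_in d p S}"

definition f_sq :: tpoly where
  "f_sq = [(0, (0, 0)), (0, (1, 0)), (0, (0, 1)), (0, (1, 1))]"

definition entropy_seq :: "tpoly \<Rightarrow> nat \<Rightarrow> real" where
  "entropy_seq f N = real (polydim N (U N f)) / real N ^ 2"

end

theory Submission imports Defs "HOL-Library.Function_Algebras" begin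

lemma sum_fun_apply': "(sum F A) x = (\<Sum>a\<in>A. F a x)"
  by (induction A rule: infinite_finite_induct) (auto simp: plus_fun_def zero_fun_def)

lemma vs_fun: "vector_space (\<lambda>(r::real) (f::int\<times>int\<Rightarrow>real) x. r * f x)"
  by unfold_locales (auto simp: plus_fun_def algebra_simps)

lemma finite_T: "finite (T N)" and card_T: "card (T N) = N * N"
  by (auto simp: T_def card_cartesian_product)

lemma aff_indep_bound:
  assumes A: "aff_indep N d p" shows "d \<le> N * N"
proof -
  interpret V: vector_space "\<lambda>(r::real) (f::int\<times>int\<Rightarrow>real) x. r * f x" by (rule vs_fun)
  define v where "v i = (\<lambda>k. if k \<in> T N then p i k - p 0 k else 0)" for i
  define e where "e t = (\<lambda>k::int\<times>int. if k = t then (1::real) else 0)" for t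
  define W where "W = e ` T N"
  have fW: "finite W" using finite_T W_def by auto
  have cW: "card W \<le> N * N" unfolding W_def using card_image_le[OF finite_T] card_T by metis
  have vsp: "v i \<in> V.span W" for i
  proof -
    have "v i = (\<Sum>t\<in>T N. (\<lambda>x. v i t * e t x))"
    proof (rule ext)
      fix x
      have "(\<Sum>t\<in>T N. (\<lambda>x. v i t * e t x)) x = (\<Sum>t\<in>T N. if x = t then v i t else 0)"
        unfolding sum_fun_apply' by (intro sum.cong) (auto simp: e_def)
      also have "\<dots> = v i x" using sum.delta'[OF finite_T, of x "v i"] by (simp add: v_def)
      finally show "v i x = (\<Sum>t\<in>T N. (\<lambda>x. v i t * e t x)) x" by simp
    qed
    also have "\<dots> \<in> V.span W"
      by (intro V.span_sum V.span_scale V.span_base) (auto simp: W_def)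
    finally show ?thesis .
  qed
  have key: "\<forall>i\<in>{1..d}. c i = 0" if "\<forall>k\<in>T N. (\<Sum>i\<in>{1..d}. c i * v i k) = 0" for c
    using A that unfolding aff_indep_def v_def by auto
  have inj: "inj_on v {1..d}"
  proof (rule inj_onI, rule ccontr)
    fix i j assume ij: "i \<in> {1..d}" "j \<in> {1..d}" "v i = v j" "i \<noteq> j"
    define c where "c l = (if l = i then 1 else if l = j then -1 else (0::real))" for l
    have "\<forall>k\<in>T N. (\<Sum>l\<in>{1..d}. c l * v l k) = 0"
    proof
      fix k
      have "(\<Sum>l\<in>{1..d}. c l * v l k) = (\<Sum>l\<in>{i,j}. c l * v l k)"
        by (rule sum.mono_neutral_right) (use ij in \<open>auto simp: c_def\<close>)
      also have "\<dots> = 0" using ij by (simp add: c_def)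
      finally show "(\<Sum>l\<in>{1..d}. c l * v l k) = 0" .
    qed
    from key[OF this] ij have "c i = 0" by blast
    then show False by (simp add: c_def)
  qed
  have ind: "V.independent (v ` {1..d})"
  proof
    assume "V.dependent (v ` {1..d})"
    then obtain u where u: "\<exists>w\<in>v ` {1..d}. u w \<noteq> 0"
        "(\<Sum>w\<in>v ` {1..d}. (\<lambda>x. u w * w x)) = 0"
      using V.dependent_finite by auto
    have "(\<Sum>i\<in>{1..d}. (\<lambda>x. u (v i) * v i x)) = 0"
      using u(2) sum.reindex[OF inj, of "\<lambda>w. (\<lambda>x. u w * w x)"] by (simp add: comp_def)
    then have "\<forall>k\<in>T N. (\<Sum>i\<in>{1..d}. u (v i) * v i k) = 0"
      by (simp add: fun_eq_iff sum_fun_apply' del: split_paired_All)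
    from key[OF this] u(1) show False by auto
  qed
  have "card (v ` {1..d}) \<le> card W"
    using V.independent_span_bound[OF fW ind] vsp by auto
  then show ?thesis using card_image[OF inj] cW by simp
qed

lemma U_mem:
  assumes z: "\<forall>k. k \<notin> T N \<longrightarrow> u k = 0" and nn: "\<forall>k. u k \<ge> 0"
    and od: "\<forall>k. odd (fst k) \<longrightarrow> u k = 0"
  shows "u \<in> U N f_sq"
  unfolding U_def
proof (intro CollectI conjI allI impI)
  fix k show "k \<notin> T N \<Longrightarrow> u k = 0" using z by blast
next
  fix s :: "int \<times> int"
  have lv: "lin_val f_sq u s l \<ge> 0" if "l < 4" for l
  proof -
    have "l = 0 \<or> l = 1 \<or> l = 2 \<or> l = 3" using that by arith
    then show ?thesis using nn by (auto simp: lin_val_def f_sq_def simp del: split_paired_All)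
  qed
  show "lin_sat f_sq u s"
    unfolding lin_sat_def
  proof (cases "odd (fst s)")
    case True
    have a: "lin_val f_sq u s 0 = 0" "lin_val f_sq u s 2 = 0"
      using True by (simp_all add: lin_val_def f_sq_def shiftpt_def od[rule_format])
    show "\<exists>i<length f_sq. \<exists>j<length f_sq. i \<noteq> j \<and> lin_val f_sq u s i = lin_val f_sq u s j \<and>
        (\<forall>l<length f_sq. lin_val f_sq u s i \<le> lin_val f_sq u s l)"
      apply (rule exI[of _ 0], simp add: f_sq_def)
      apply (rule exI[of _ 2])
      using a lv by (simp add: f_sq_def)
  next
    case False
    have a: "lin_val f_sq u s 1 = 0" "lin_val f_sq u s 3 = 0"
      using False by (simp_all add: lin_val_def f_sq_def shiftpt_def od[rule_format])
    show "\<exists>i<length f_sq. \<exists>j<length f_sq. i \<noteq> j \<and> lin_val f_sq u s i = lin_val f_sq u s j \<and>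
        (\<forall>l<length f_sq. lin_val f_sq u s i \<le> lin_val f_sq u s l)"
      apply (rule exI[of _ 1], simp add: f_sq_def)
      apply (rule exI[of _ 3])
      using a lv by (simp add: f_sq_def)
  qed
qed

lemma lower:
  assumes N: "N \<ge> 1"
  shows "N * (N div 2) \<le> polydim N (U N f_sq)"
proof -
  define d where "d = N * (N div 2)"
  define q where "q i = (2 * int ((i - 1) div N), int ((i - 1) mod N))" for i :: nat
  define p where "p i = (\<lambda>k. if i = 0 then 0 else if k = q i then 1 else (0::real))" for i
  have qT: "q i \<in> T N" if "i \<in> {1..d}" for i
  proof -
    have "i - 1 < N * (N div 2)" using that d_def by auto
    then have "(i - 1) div N < N div 2" using N
      by (simp add: less_mult_imp_div_less mult.commute)
    then have "2 * ((i - 1) div N) < N" by linarith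
    then show ?thesis using N by (auto simp: q_def T_def)
  qed
  have qev: "even (fst (q i))" for i by (simp add: q_def)
  have qinj: "i = j" if "i \<in> {1..d}" "j \<in> {1..d}" "q i = q j" for i j
  proof -
    have "(i - 1) div N = (j - 1) div N" "(i - 1) mod N = (j - 1) mod N"
      using that(3) by (auto simp: q_def)
    then have "i - 1 = j - 1" by (metis div_mult_mod_eq)
    then show ?thesis using that by auto
  qed
  have ai: "aff_indep N d p"
    unfolding aff_indep_def
  proof (intro allI impI ballI)
    fix c :: "nat \<Rightarrow> real" and i
    assume h: "\<forall>k\<in>T N. (\<Sum>i\<in>{1..d}. c i * (p i k - p 0 k)) = 0" and i: "i \<in> {1..d}"
    have "(\<Sum>l\<in>{1..d}. c l * (p l (q i) - p 0 (q i))) = (\<Sum>l\<in>{1..d}. if l = i then c l else 0)"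
    proof (intro sum.cong refl)
      fix l assume l: "l \<in> {1..d}"
      have e: "(q i = q l) = (l = i)" using qinj[OF i l] by auto
      have "l \<noteq> 0" using l by simp
      then show "c l * (p l (q i) - p 0 (q i)) = (if l = i then c l else 0)"
        unfolding p_def using e by simp
    qed
    also have "\<dots> = c i" using i by simp
    finally have "(\<Sum>l\<in>{1..d}. c l * (p l (q i) - p 0 (q i))) = c i" .
    moreover have "(\<Sum>l\<in>{1..d}. c l * (p l (q i) - p 0 (q i))) = 0" using h qT[OF i] by blast
    ultimately show "c i = 0" by simp
  qed
  have si: "simplex_in d p (U N f_sq)"
    unfolding simplex_in_def
  proof (intro allI impI)
    fix w :: "nat \<Rightarrow> real" assume w: "(\<forall>i\<le>d. 0 \<le> w i) \<and> sum w {..d} = 1"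
    have c1: "\<forall>k. k \<notin> T N \<longrightarrow> (\<Sum>i\<le>d. w i * p i k) = 0"
    proof (intro allI impI)
      fix k assume kT: "k \<notin> T N"
      show "(\<Sum>i\<le>d. w i * p i k) = 0"
      proof (intro sum.neutral ballI)
        fix i assume iin: "i \<in> {..d}"
        show "w i * p i k = 0"
        proof (cases "i = 0")
          case True then show ?thesis by (simp add: p_def)
        next
          case False
          then have "i \<in> {1..d}" using iin by auto
          then have "q i \<in> T N" by (rule qT)
          then have "k \<noteq> q i" using kT by metis
          then show ?thesis by (simp add: p_def)
        qed
      qed
    qed
    have c2: "\<forall>k. odd (fst k) \<longrightarrow> (\<Sum>i\<le>d. w i * p i k) = 0"
    proof (intro allI impI)
      fix k :: "int \<times> int" assume oa: "odd (fst k)"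
      show "(\<Sum>i\<le>d. w i * p i k) = 0"
      proof (intro sum.neutral ballI)
        fix i
        have "k \<noteq> q i" using qev[of i] oa by metis
        then show "w i * p i k = 0" by (simp add: p_def)
      qed
    qed
    have c3: "\<forall>k. 0 \<le> (\<Sum>i\<le>d. w i * p i k)"
    proof
      fix k
      show "0 \<le> (\<Sum>i\<le>d. w i * p i k)"
        using w by (intro sum_nonneg) (simp add: p_def)
    qed
    show "(\<lambda>k. \<Sum>i\<le>d. w i * p i k) \<in> U N f_sq"
      by (rule U_mem[OF c1 c3 c2])
  qed
  have bdd: "bdd_above {d. \<exists>p. aff_indep N d p \<and> simplex_in d p (U N f_sq)}"
    unfolding bdd_above_def using aff_indep_bound by blast
  show ?thesis unfolding polydim_def d_def[symmetric]
    using ai si by (intro cSup_upper[OF _ bdd]) auto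
qed

theorem mainTheorem5:
  shows "(\<forall>N\<ge>1. N * (N div 2) \<le> polydim N (U N f_sq))
       \<and> (convergent (entropy_seq f_sq) \<longrightarrow>
            lim (entropy_seq f_sq) \<ge> 1/2 \<and> lim (entropy_seq f_sq) > 0)"
proof (intro conjI allI impI)
  show "N * (N div 2) \<le> polydim N (U N f_sq)" if "N \<ge> 1" for N using lower that by blast
  assume c: "convergent (entropy_seq f_sq)"
  have lo: "1/2 - (1/2) / real N \<le> entropy_seq f_sq N" if N: "N \<ge> 1" for N
  proof -
    have "N \<le> 2 * (N div 2) + 1" by presburger
    then have "real N \<le> real (2 * (N div 2) + 1)" by (simp only: of_nat_le_iff)
    then have h1: "real (N div 2) \<ge> (real N - 1) / 2" by simp
    have "1/2 - (1/2) / real N = real N * ((real N - 1) / 2) / real N ^ 2"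
      using N by (simp add: field_simps power2_eq_square)
    also have "\<dots> \<le> real N * real (N div 2) / real N ^ 2"
      using h1 by (intro divide_right_mono mult_left_mono) auto
    also have "\<dots> \<le> real (polydim N (U N f_sq)) / real N ^ 2"
      using lower[OF N] by (intro divide_right_mono) (simp_all add: of_nat_mult[symmetric] del: of_nat_mult)
    finally show ?thesis by (simp add: entropy_seq_def)
  qed
  have t0: "(\<lambda>N. (1/2) / real N) \<longlonglongrightarrow> 0" by (rule lim_const_over_n)
  have t: "(\<lambda>N. 1/2 - (1/2) / real N) \<longlonglongrightarrow> 1/2"
    using tendsto_diff[OF tendsto_const t0, of "1/2"] by simp
  have "1/2 \<le> lim (entropy_seq f_sq)"
    using LIMSEQ_le[OF t c[unfolded convergent_LIMSEQ_iff]] lo by auto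
  then show "1/2 \<le> lim (entropy_seq f_sq)" "lim (entropy_seq f_sq) > 0" by auto
qed

end
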